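(* Assume $V$ is positive definite with smallest eigenvalue $\lambda$, and that $i_n$, $n\ge0$, are i.i.d. uniformly distributed on $\{1,\dots,d\}$. Then for every $j\ge0$, $$E(\|M_j\|^2)\le d^2\,(1-\lambda d^{-1})^j.$$
   Context: Let $d\ge1$ and let $V$ be a real symmetric $d\times d$ matrix whose diagonal entries all equal $1$. Write $\sqrt V$ for its symmetric positive semi-definite square root and $I$ for the $d\times d$ identity. Let $e_i$ be the $i$-th standard basis column vector of $\mathbb R^d$. For $1\le i\le d$ let $f_i=\sqrt V e_i$ and $P_i=I-f_if_i^T$. For $j\ge0$ let $M_j=P_{i_{j-1}}P_{i_{j-2}}\cdots P_{i_0}$, with $M_0=I$. For a $d\times d$ matrix $A$, $\|A\|=\sqrt{\operatorname{tr}(A^TVA)}$. *)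

theory Defs
  imports "HOL-Analysis.Analysis" "HOL-Probability.Probability"
begin

text \<open>Symmetric positive semi-definite square root of a matrix (unique when V is symmetric PSD).\<close>
definition psd_sqrt :: "real^'n^'n \<Rightarrow> real^'n^'n" where
  "psd_sqrt V = (THE S. transpose S = S \<and> (\<forall>x. 0 \<le> x \<bullet> (S *v x)) \<and> S ** S = V)"

definition pos_def :: "real^'n^'n \<Rightarrow> bool" where
  "pos_def V \<longleftrightarrow> (\<forall>x. x \<noteq> 0 \<longrightarrow> 0 < x \<bullet> (V *v x))"

definition is_eigenvalue :: "real^'n^'n \<Rightarrow> real \<Rightarrow> bool" where
  "is_eigenvalue V l \<longleftrightarrow> (\<exists>v. v \<noteq> 0 \<and> V *v v = l *\<^sub>R v)"

definition fvec :: "real^'n^'n \<Rightarrow> 'n \<Rightarrow> real^'n" where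
  "fvec V i = psd_sqrt V *v axis i 1"

definition Pmat :: "real^'n^'n \<Rightarrow> 'n \<Rightarrow> real^'n^'n" where
  "Pmat V i = mat 1 - (\<chi> a b. fvec V i $ a * fvec V i $ b)"

fun Mmat :: "real^'n^'n \<Rightarrow> (nat \<Rightarrow> 'n) \<Rightarrow> nat \<Rightarrow> real^'n^'n" where
  "Mmat V idx 0 = mat 1"
| "Mmat V idx (Suc j) = Pmat V (idx j) ** Mmat V idx j"

definition Vnorm :: "real^'n^'n \<Rightarrow> real^'n^'n \<Rightarrow> real" where
  "Vnorm V A = sqrt (trace (transpose A ** V ** A))"

end

theory Submission
  imports Defs
begin

lemma sym_inner:
  fixes V :: "real^'n^'n"
  assumes "transpose V = V"
  shows "(V *v x) \<bullet> y = x \<bullet> (V *v y)"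
  by (metis assms dot_lmul_matrix vector_transpose_matrix)

lemma eig_basis_aux:
  fixes V :: "real^'n^'n"
  assumes sym: "transpose V = V"
  shows "subspace W \<Longrightarrow> (\<forall>x\<in>W. V *v x \<in> W) \<Longrightarrow> \<exists>B. finite B \<and> B \<subseteq> W \<and> span B = W \<and>
     (\<forall>b\<in>B. \<forall>c\<in>B. b \<noteq> c \<longrightarrow> b \<bullet> c = 0) \<and> (\<forall>b\<in>B. b \<bullet> b = 1 \<and> (\<exists>\<mu>. V *v b = \<mu> *\<^sub>R b))"
proof (induction "dim W" arbitrary: W rule: less_induct)
  case less
  show ?case
  proof (cases "W \<subseteq> {0}")
    case True
    then have "W = {0}" using less.prems subspace_0 by blast
    then show ?thesis by (intro exI[of _ "{}"]) auto
  next
    case False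
    then obtain x where x: "x \<in> W" "x \<noteq> 0" by auto
    define K where "K = sphere (0::real^'n) 1 \<inter> W"
    have "compact K" unfolding K_def using closed_subspace[OF less.prems(1)]
      by (intro compact_Int_closed compact_sphere)
    moreover have "x /\<^sub>R norm x \<in> K" unfolding K_def using x less.prems(1)
      by (auto simp: subspace_scale)
    hence "K \<noteq> {}" by auto
    moreover have "continuous_on K (\<lambda>y. y \<bullet> (V *v y))"
      by (intro continuous_intros linear_continuous_on matrix_vector_mul_bounded_linear)
    ultimately obtain u where u: "u \<in> K" "\<forall>y\<in>K. y \<bullet> (V *v y) \<le> u \<bullet> (V *v u)"
      using continuous_attains_sup by blast
    define m where "m = u \<bullet> (V *v u)"
    have uW: "u \<in> W" and uu: "u \<bullet> u = 1" using u(1) unfolding K_def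
      by (auto simp: norm_eq_1)
    have key: "y \<bullet> (V *v y) \<le> m * (y \<bullet> y)" if "y \<in> W" for y
    proof (cases "y = 0")
      case True then show ?thesis by simp
    next
      case False
      define r where "r = norm y"
      have r: "r > 0" using False r_def by auto
      have "y /\<^sub>R r \<in> K" unfolding K_def using that less.prems(1) r r_def
        by (auto simp: subspace_scale)
      hence "(y /\<^sub>R r) \<bullet> (V *v (y /\<^sub>R r)) \<le> m" using u m_def by auto
      hence "(y \<bullet> (V *v y)) / r^2 \<le> m"
        using r by (simp add: matrix_vector_mult_scaleR power2_eq_square field_simps)
      hence "y \<bullet> (V *v y) \<le> m * r^2" using r by (simp add: divide_le_eq)
      then show ?thesis by (simp add: r_def power2_norm_eq_inner)
    qed
    have orth: "w \<bullet> (V *v u) = 0" if w: "w \<in> W" "w \<bullet> u = 0" for w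
    proof -
      define a where "a = w \<bullet> (V *v u)"
      define c where "c = w \<bullet> (V *v w) - m * (w \<bullet> w)"
      have q: "2 * t * a + t^2 * c \<le> 0" for t
      proof -
        have "u + t *\<^sub>R w \<in> W" using w uW less.prems(1)
          by (simp add: subspace_add subspace_scale)
        hence "(u + t *\<^sub>R w) \<bullet> (V *v (u + t *\<^sub>R w)) \<le> m * ((u + t *\<^sub>R w) \<bullet> (u + t *\<^sub>R w))"
          by (rule key)
        moreover have "u \<bullet> (V *v w) = a" unfolding a_def
          using sym_inner[OF sym, of u w] by (simp add: inner_commute)
        moreover have "u \<bullet> w = 0" using w by (simp add: inner_commute)
        ultimately show ?thesis
          by (simp add: matrix_vector_right_distrib matrix_vector_mult_scaleR inner_add_left
              inner_add_right uu w(2) m_def[symmetric] a_def[symmetric] c_def algebra_simps power2_eq_square)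
      qed
      have "a = 0"
      proof -
        define D where "D = \<bar>c\<bar> + 1"
        define t where "t = a / D"
        have cp: "D > 0" unfolding D_def by simp
        have "2 * t * a + t^2 * c \<le> 0" by (rule q)
        hence "(2 * t * a + t^2 * c) * D^2 \<le> 0"
          by (simp add: mult_nonpos_nonneg)
        moreover have "(2 * t * a + t^2 * c) * D^2 = a^2 * (2 * D + c)"
          unfolding t_def using cp by (simp add: field_simps power2_eq_square)
        ultimately have "a^2 * (2 * (\<bar>c\<bar> + 1) + c) \<le> 0" unfolding D_def by simp
        moreover have "2 * (\<bar>c\<bar> + 1) + c > 0" by (simp add: abs_if)
        ultimately have "a^2 \<le> 0" by (simp add: mult_le_0_iff)
        then show ?thesis by simp
      qed
      then show ?thesis by (simp add: a_def)
    qed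
    have eig: "V *v u = m *\<^sub>R u"
    proof -
      define w where "w = V *v u - m *\<^sub>R u"
      have wW: "w \<in> W" unfolding w_def using less.prems uW
        by (simp add: subspace_diff subspace_scale)
      have "w \<bullet> u = 0" unfolding w_def using uu
        by (simp add: inner_diff_left inner_diff_right m_def inner_commute)
      hence "w \<bullet> (V *v u) = 0" using orth wW by blast
      hence "w \<bullet> w = 0" using \<open>w \<bullet> u = 0\<close> unfolding w_def[of] 
        by (simp add: inner_diff_right)
      then show ?thesis unfolding w_def by simp
    qed
    define W' where "W' = {y \<in> W. y \<bullet> u = 0}"
    have sW': "subspace W'" using less.prems(1) unfolding W'_def subspace_def
      by (auto simp: inner_add_left)
    have iW': "\<forall>y\<in>W'. V *v y \<in> W'"
    proof
      fix y assume y: "y \<in> W'"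
      have "(V *v y) \<bullet> u = y \<bullet> (V *v u)" by (rule sym_inner[OF sym])
      also have "\<dots> = 0" using y by (simp add: eig W'_def inner_commute)
      finally show "V *v y \<in> W'" using y less.prems(2) by (auto simp: W'_def)
    qed
    have "W' \<subset> W" using uW uu unfolding W'_def by (metis (mono_tags, lifting) mem_Collect_eq psubsetI subsetI zero_neq_one)
    hence "span W' \<subset> span W" by (simp only: span_eq_iff[THEN iffD2, OF sW'] span_eq_iff[THEN iffD2, OF less.prems(1)])
    hence "dim W' < dim W" by (rule dim_psubset)
    then obtain B' where B': "finite B'" "B' \<subseteq> W'" "span B' = W'"
      "\<forall>b\<in>B'. \<forall>c\<in>B'. b \<noteq> c \<longrightarrow> b \<bullet> c = 0" "\<forall>b\<in>B'. b \<bullet> b = 1 \<and> (\<exists>\<mu>. V *v b = \<mu> *\<^sub>R b)"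
      using less.hyps[OF \<open>dim W' < dim W\<close> sW' iW'] by blast
    have Bo: "\<forall>b\<in>B'. b \<bullet> u = 0 \<and> u \<bullet> b = 0" using B'(2) by (auto simp: W'_def inner_commute)
    have "span (insert u B') = W"
    proof
      show "span (insert u B') \<subseteq> W" using uW B'(2) less.prems(1)
        by (intro span_minimal) (auto simp: W'_def)
      show "W \<subseteq> span (insert u B')"
      proof
        fix y assume y: "y \<in> W"
        have "y - (y \<bullet> u) *\<^sub>R u \<in> W'" unfolding W'_def using y uW less.prems(1) uu
          by (simp add: subspace_diff subspace_scale inner_diff_left)
        hence "y - (y \<bullet> u) *\<^sub>R u \<in> span (insert u B')" using B'(3) span_mono[of B' "insert u B'"] by auto
        moreover have "(y \<bullet> u) *\<^sub>R u \<in> span (insert u B')" by (simp add: span_base span_scale)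
        ultimately have "y - (y \<bullet> u) *\<^sub>R u + (y \<bullet> u) *\<^sub>R u \<in> span (insert u B')" by (rule span_add)
        then show "y \<in> span (insert u B')" by simp
      qed
    qed
    note sp = this
    show ?thesis
    proof (intro exI[of _ "insert u B'"] conjI)
      show "finite (insert u B')" using B'(1) by simp
      show "insert u B' \<subseteq> W" using uW B'(2) unfolding W'_def by blast
      show "span (insert u B') = W" by (rule sp)
      show "\<forall>b\<in>insert u B'. \<forall>c\<in>insert u B'. b \<noteq> c \<longrightarrow> b \<bullet> c = 0"
        using B'(4) Bo by blast
      show "\<forall>b\<in>insert u B'. b \<bullet> b = 1 \<and> (\<exists>\<mu>. V *v b = \<mu> *\<^sub>R b)"
        using B'(5) uu eig by blast
    qed
  qed
qed

lemma coeff_sum: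
  fixes B :: "(real^'n) set"
  assumes fin: "finite B" and orth: "\<forall>b\<in>B. \<forall>c\<in>B. b \<noteq> c \<longrightarrow> b \<bullet> c = 0"
    and nrm: "\<forall>b\<in>B. b \<bullet> b = 1" and c: "c \<in> B"
  shows "c \<bullet> (\<Sum>b\<in>B. f b *\<^sub>R b) = f c"
proof -
  have "c \<bullet> (\<Sum>b\<in>B. f b *\<^sub>R b) = (\<Sum>b\<in>B. f b * (c \<bullet> b))"
    by (simp add: inner_sum_right)
  also have "\<dots> = f c * (c \<bullet> c) + (\<Sum>b\<in>B-{c}. f b * (c \<bullet> b))"
    using fin c by (simp add: sum.remove)
  also have "(\<Sum>b\<in>B-{c}. f b * (c \<bullet> b)) = 0"
    using orth c by (intro sum.neutral) auto
  finally show ?thesis using nrm c by simp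
qed

lemma orthonormal_expand:
  fixes B :: "(real^'n) set"
  assumes fin: "finite B" and sp: "span B = UNIV" and orth: "\<forall>b\<in>B. \<forall>c\<in>B. b \<noteq> c \<longrightarrow> b \<bullet> c = 0"
    and nrm: "\<forall>b\<in>B. b \<bullet> b = 1"
  shows "x = (\<Sum>b\<in>B. (b \<bullet> x) *\<^sub>R b)"
proof -
  define r where "r = x - (\<Sum>b\<in>B. (b \<bullet> x) *\<^sub>R b)"
  have "orthogonal r y" if "y \<in> B" for y
    using coeff_sum[OF fin orth nrm that, of "\<lambda>b. b \<bullet> x"] that
    by (simp add: orthogonal_def r_def inner_diff_left inner_diff_right inner_commute)
  hence "orthogonal r r" using sp orthogonal_to_span[of r B r] by blast
  hence "r = 0" by (simp add: orthogonal_def)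
  then show ?thesis by (simp add: r_def)
qed

lemma sym_from_inner:
  fixes A :: "real^'n^'n"
  assumes "\<And>x y. (A *v x) \<bullet> y = x \<bullet> (A *v y)"
  shows "transpose A = A"
proof -
  have "A $ j $ i = A $ i $ j" for i j
  proof -
    have "A $ j $ i = (A *v axis i 1) \<bullet> axis j 1"
      by (simp add: matrix_vector_mult_basis column_def inner_axis)
    also have "\<dots> = axis i 1 \<bullet> (A *v axis j 1)" by (rule assms)
    also have "\<dots> = A $ i $ j"
      by (simp add: matrix_vector_mult_basis column_def inner_axis')
    finally show ?thesis .
  qed
  then show ?thesis unfolding vec_eq_iff transpose_def by simp
qed

lemma eig_basis:
  fixes V :: "real^'n^'n"
  assumes sym: "transpose V = V"
  obtains B where "finite B" "span B = UNIV" "\<forall>b\<in>B. \<forall>c\<in>B. b \<noteq> c \<longrightarrow> b \<bullet> c = 0"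
     "\<forall>b\<in>B. b \<bullet> b = 1" "\<forall>b\<in>B. V *v b = (b \<bullet> (V *v b)) *\<^sub>R b"
proof -
  have "\<exists>B. finite B \<and> B \<subseteq> UNIV \<and> span B = UNIV \<and>
     (\<forall>b\<in>B. \<forall>c\<in>B. b \<noteq> c \<longrightarrow> b \<bullet> c = 0) \<and> (\<forall>b\<in>B. b \<bullet> b = 1 \<and> (\<exists>\<mu>. V *v b = \<mu> *\<^sub>R b))"
    using eig_basis_aux[OF sym subspace_UNIV] by simp
  then obtain B where B: "finite B" "span B = UNIV" "\<forall>b\<in>B. \<forall>c\<in>B. b \<noteq> c \<longrightarrow> b \<bullet> c = 0"
     "\<forall>b\<in>B. b \<bullet> b = 1 \<and> (\<exists>\<mu>. V *v b = \<mu> *\<^sub>R b)"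
    by metis
  have ev: "\<forall>b\<in>B. V *v b = (b \<bullet> (V *v b)) *\<^sub>R b"
  proof
    fix b assume "b \<in> B"
    then obtain \<mu> where "V *v b = \<mu> *\<^sub>R b" "b \<bullet> b = 1" using B(4) by blast
    then show "V *v b = (b \<bullet> (V *v b)) *\<^sub>R b" by simp
  qed
  have "\<forall>b\<in>B. b \<bullet> b = 1" using B(4) by blast
  then show ?thesis using that[OF B(1-3) _ ev] by blast
qed

lemma rayleigh:
  fixes V :: "real^'n^'n"
  assumes sym: "transpose V = V" and ev: "\<forall>mu. is_eigenvalue V mu \<longrightarrow> lam \<le> mu"
  shows "lam * (x \<bullet> x) \<le> x \<bullet> (V *v x)"
proof -
  obtain B where B: "finite B" "span B = UNIV" "\<forall>b\<in>B. \<forall>c\<in>B. b \<noteq> c \<longrightarrow> b \<bullet> c = 0"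
     "\<forall>b\<in>B. b \<bullet> b = 1" "\<forall>b\<in>B. V *v b = (b \<bullet> (V *v b)) *\<^sub>R b"
    using eig_basis[OF sym] by blast
  have le: "lam \<le> b \<bullet> (V *v b)" if "b \<in> B" for b
  proof -
    have "b \<noteq> 0" using B(4) that by auto
    then have "is_eigenvalue V (b \<bullet> (V *v b))" unfolding is_eigenvalue_def using B(5) that by blast
    then show ?thesis using ev by blast
  qed
  have xe: "x = (\<Sum>b\<in>B. (b \<bullet> x) *\<^sub>R b)" by (rule orthonormal_expand[OF B(1-4)])
  have "x \<bullet> x = (\<Sum>b\<in>B. (b \<bullet> x) *\<^sub>R b) \<bullet> x"
    by (rule arg_cong[OF xe, where f="\<lambda>z. z \<bullet> x"])
  also have "\<dots> = (\<Sum>b\<in>B. (b \<bullet> x) * (b \<bullet> x))"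
    by (simp only: inner_sum_left inner_scaleR_left)
  finally have "x \<bullet> x = (\<Sum>b\<in>B. (b \<bullet> x) * (b \<bullet> x))" .
  moreover have "x \<bullet> (V *v x) = (\<Sum>b\<in>B. (b \<bullet> (V *v b)) * ((b \<bullet> x) * (b \<bullet> x)))"
  proof -
    have "V *v x = (\<Sum>b\<in>B. ((b \<bullet> x) * (b \<bullet> (V *v b))) *\<^sub>R b)"
      apply (subst arg_cong[OF xe, where f="\<lambda>z. V *v z"])
      apply (simp add: linear_sum[OF matrix_vector_mul_linear] matrix_vector_mult_scaleR)
      by (intro sum.cong refl) (metis B(5) scaleR_scaleR)
    then show ?thesis by (simp add: inner_sum_right mult_ac inner_commute)
  qed
  ultimately show ?thesis
    by (simp add: sum_distrib_left le mult_right_mono sum_mono)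
qed

lemma psd_sqrt_props:
  fixes V :: "real^'n^'n"
  assumes sym: "transpose V = V" and pd: "pos_def V"
  shows "transpose (psd_sqrt V) = psd_sqrt V \<and> psd_sqrt V ** psd_sqrt V = V"
proof -
  obtain B where B: "finite B" "span B = UNIV" "\<forall>b\<in>B. \<forall>c\<in>B. b \<noteq> c \<longrightarrow> b \<bullet> c = 0"
     "\<forall>b\<in>B. b \<bullet> b = 1" "\<forall>b\<in>B. V *v b = (b \<bullet> (V *v b)) *\<^sub>R b"
    using eig_basis[OF sym] by blast
  define \<mu> where "\<mu> b = b \<bullet> (V *v b)" for b
  have \<mu>pos: "\<mu> b > 0" if "b \<in> B" for b
  proof -
    have "b \<noteq> 0" using B(4) that by auto
    then show ?thesis using pd unfolding pos_def_def \<mu>_def by blast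
  qed
  have Vb: "V *v b = \<mu> b *\<^sub>R b" if "b \<in> B" for b using B(5) that unfolding \<mu>_def by blast
  have xe: "x = (\<Sum>b\<in>B. (b \<bullet> x) *\<^sub>R b)" for x by (rule orthonormal_expand[OF B(1-4)])
  have Vx: "V *v x = (\<Sum>b\<in>B. (\<mu> b * (b \<bullet> x)) *\<^sub>R b)" for x
  proof -
    have "V *v x = V *v (\<Sum>b\<in>B. (b \<bullet> x) *\<^sub>R b)" by (rule arg_cong[OF xe])
    also have "\<dots> = (\<Sum>b\<in>B. (b \<bullet> x) *\<^sub>R (V *v b))"
      by (simp add: linear_sum[OF matrix_vector_mul_linear] matrix_vector_mult_scaleR)
    also have "\<dots> = (\<Sum>b\<in>B. (\<mu> b * (b \<bullet> x)) *\<^sub>R b)"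
      by (intro sum.cong refl) (simp add: Vb)
    finally show ?thesis .
  qed
  define Sf where "Sf x = (\<Sum>b\<in>B. (sqrt (\<mu> b) * (b \<bullet> x)) *\<^sub>R b)" for x
  have lin: "linear Sf"
  proof (rule linearI)
    fix x y :: "real^'n" and c :: real
    show "Sf (x + y) = Sf x + Sf y"
      by (simp add: Sf_def inner_add_right distrib_left scaleR_add_left sum.distrib)
    show "Sf (c *\<^sub>R x) = c *\<^sub>R Sf x"
      by (simp add: Sf_def scaleR_sum_right mult_ac)
  qed
  define S where "S = matrix Sf"
  have Sx: "S *v x = Sf x" for x unfolding S_def using matrix_works[OF lin[unfolded linear_matrix_vector_mul_eq[symmetric]]] by simp
  have cS: "c \<bullet> (S *v x) = sqrt (\<mu> c) * (c \<bullet> x)" if "c \<in> B" for c x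
    unfolding Sx Sf_def by (rule coeff_sum[OF B(1,3,4) that])
  have symS: "(S *v x) \<bullet> y = x \<bullet> (S *v y)" for x y
    by (simp add: Sx Sf_def inner_sum_left inner_sum_right inner_commute mult_ac)
  have trS: "transpose S = S" by (rule sym_from_inner) (rule symS)
  have psdS: "0 \<le> x \<bullet> (S *v x)" for x
    unfolding Sx Sf_def inner_sum_right
    by (intro sum_nonneg) (simp add: inner_commute mult.assoc \<mu>pos less_imp_le)
  have SS: "S ** S = V"
  proof -
    have "(S ** S) *v x = V *v x" for x
    proof -
      have "(S ** S) *v x = Sf (S *v x)" by (simp add: matrix_vector_mul_assoc[symmetric] Sx)
      also have "\<dots> = (\<Sum>b\<in>B. (\<mu> b * (b \<bullet> x)) *\<^sub>R b)"
        unfolding Sf_def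
        by (intro sum.cong refl) (simp add: cS \<mu>pos less_imp_le mult.assoc[symmetric])
      also have "\<dots> = V *v x" by (rule Vx[symmetric])
      finally show ?thesis .
    qed
    then show ?thesis by (simp add: matrix_eq)
  qed
  have uniq: "T = S" if T: "transpose T = T" "\<forall>x. 0 \<le> x \<bullet> (T *v x)" "T ** T = V" for T
  proof -
    have Tb: "T *v b = sqrt (\<mu> b) *\<^sub>R b" if b: "b \<in> B" for b
    proof -
      define s where "s = sqrt (\<mu> b)"
      have s: "s > 0" "s * s = \<mu> b" using \<mu>pos[OF b] by (auto simp: s_def)
      define u where "u = T *v b - s *\<^sub>R b"
      have TT: "T *v (T *v b) = \<mu> b *\<^sub>R b"
        by (simp add: matrix_vector_mul_assoc T(3) Vb b)
      have "T *v u = - s *\<^sub>R u"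
        unfolding u_def using TT s(2)
        by (simp add: matrix_vector_mult_diff_distrib matrix_vector_mult_scaleR algebra_simps)
      hence "0 \<le> - s * (u \<bullet> u)" using T(2) by (metis inner_scaleR_right)
      hence "u \<bullet> u \<le> 0" using s(1) by (simp add: mult_le_0_iff)
      hence "u = 0" by (metis inner_eq_zero_iff inner_ge_zero order_antisym)
      then show ?thesis by (simp add: u_def s_def)
    qed
    have "T *v x = S *v x" for x
    proof -
      have "T *v x = T *v (\<Sum>b\<in>B. (b \<bullet> x) *\<^sub>R b)" by (rule arg_cong[OF xe])
      also have "\<dots> = (\<Sum>b\<in>B. (b \<bullet> x) *\<^sub>R (T *v b))"
        by (simp add: linear_sum[OF matrix_vector_mul_linear] matrix_vector_mult_scaleR)
      also have "\<dots> = S *v x"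
        unfolding Sx Sf_def by (intro sum.cong refl) (simp add: Tb)
      finally show ?thesis .
    qed
    then show ?thesis by (simp add: matrix_eq)
  qed
  have "psd_sqrt V = S" unfolding psd_sqrt_def
  proof (rule the_equality)
    show "transpose S = S \<and> (\<forall>x. 0 \<le> x \<bullet> (S *v x)) \<and> S ** S = V" using trS psdS SS by blast
    show "T = S" if "transpose T = T \<and> (\<forall>x. 0 \<le> x \<bullet> (T *v x)) \<and> T ** T = V" for T
      using that uniq by blast
  qed
  then show ?thesis using trS SS by simp
qed
context
  fixes V :: "real^'n^'n"
  assumes sym: "transpose V = V" and pd: "pos_def V" and diag: "\<forall>i. V $ i $ i = 1"
begin

lemma trS: "transpose (psd_sqrt V) = psd_sqrt V" using psd_sqrt_props[OF sym pd] by blast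
lemma SS: "psd_sqrt V ** psd_sqrt V = V" using psd_sqrt_props[OF sym pd] by blast

lemma fvec_inner: "fvec V i \<bullet> x = (psd_sqrt V *v x) $ i"
proof -
  have "fvec V i \<bullet> x = axis i 1 \<bullet> (psd_sqrt V *v x)"
    unfolding fvec_def by (rule sym_inner[OF trS])
  then show ?thesis by (simp add: inner_axis')
qed

lemma fvec_norm: "fvec V i \<bullet> fvec V i = 1"
proof -
  have "fvec V i \<bullet> fvec V i = (psd_sqrt V *v (psd_sqrt V *v axis i 1)) $ i"
    using fvec_inner[of i "fvec V i"] by (simp add: fvec_def)
  also have "\<dots> = (V *v axis i 1) $ i" by (simp add: matrix_vector_mul_assoc SS)
  also have "\<dots> = 1" using diag by (simp add: matrix_vector_mult_basis column_def)
  finally show ?thesis .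
qed

lemma sum_fsq: "(\<Sum>i\<in>UNIV. (fvec V i \<bullet> x)^2) = x \<bullet> (V *v x)"
proof -
  have "(\<Sum>i\<in>UNIV. (fvec V i \<bullet> x)^2) = (psd_sqrt V *v x) \<bullet> (psd_sqrt V *v x)"
    unfolding fvec_inner by (simp add: inner_vec_def power2_eq_square)
  also have "\<dots> = x \<bullet> (psd_sqrt V *v (psd_sqrt V *v x))" by (rule sym_inner[OF trS])
  also have "\<dots> = x \<bullet> (V *v x)" by (simp add: matrix_vector_mul_assoc SS)
  finally show ?thesis .
qed

lemma quad_nonneg: "0 \<le> x \<bullet> (V *v x)"
  by (simp flip: sum_fsq add: sum_nonneg)

lemma quad_upper: "x \<bullet> (V *v x) \<le> real CARD('n) * (x \<bullet> x)"
proof -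
  have "x \<bullet> (V *v x) = (\<Sum>i\<in>UNIV. (fvec V i \<bullet> x)^2)" by (simp add: sum_fsq)
  also have "\<dots> \<le> (\<Sum>i\<in>(UNIV::'n set). x \<bullet> x)"
  proof (intro sum_mono)
    fix i :: 'n
    have "(fvec V i \<bullet> x)^2 \<le> (fvec V i \<bullet> fvec V i) * (x \<bullet> x)" by (rule Cauchy_Schwarz_ineq)
    then show "(fvec V i \<bullet> x)^2 \<le> x \<bullet> x" by (simp add: fvec_norm)
  qed
  also have "\<dots> = real CARD('n) * (x \<bullet> x)" by simp
  finally show ?thesis .
qed

lemma Pmat_mult: "Pmat V i *v x = x - (fvec V i \<bullet> x) *\<^sub>R fvec V i"
proof -
  have "(\<chi> a b. fvec V i $ a * fvec V i $ b) *v x = (fvec V i \<bullet> x) *\<^sub>R fvec V i"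
    by (simp add: vec_eq_iff matrix_vector_mult_def inner_vec_def sum_distrib_left mult_ac)
  then show ?thesis
    by (simp add: Pmat_def matrix_vector_mult_diff_rdistrib)
qed

lemma Pmat_norm: "(Pmat V i *v x) \<bullet> (Pmat V i *v x) = x \<bullet> x - (fvec V i \<bullet> x)^2"
  by (simp add: Pmat_mult inner_diff_left inner_diff_right fvec_norm inner_commute power2_eq_square)

lemma step_avg:
  assumes ev: "\<forall>mu. is_eigenvalue V mu \<longrightarrow> lam \<le> mu"
  shows "(\<Sum>i\<in>UNIV. (Pmat V i *v x) \<bullet> (Pmat V i *v x)) / real CARD('n)
     \<le> (1 - lam / real CARD('n)) * (x \<bullet> x)"
proof -
  have d: "real CARD('n) > 0" by simp
  have "(\<Sum>i\<in>UNIV. (Pmat V i *v x) \<bullet> (Pmat V i *v x)) = real CARD('n) * (x \<bullet> x) - x \<bullet> (V *v x)"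
    by (simp add: Pmat_norm sum_subtractf sum_fsq)
  also have "\<dots> \<le> real CARD('n) * (x \<bullet> x) - lam * (x \<bullet> x)"
    using rayleigh[OF sym ev] by simp
  moreover have "(1 - lam / real CARD('n)) * (x \<bullet> x) = (real CARD('n) * (x \<bullet> x) - lam * (x \<bullet> x)) / real CARD('n)"
    using d by (simp add: field_simps)
  ultimately show ?thesis using d by (simp add: divide_right_mono)
qed

lemma trace_formula:
  "trace (transpose A ** V ** A) = (\<Sum>k\<in>UNIV. (A *v axis k 1) \<bullet> (V *v (A *v axis k 1)))"
proof -
  have col: "A *v axis k 1 = (\<chi> a. A$a$k)" for k by (simp add: matrix_vector_mult_basis column_def)
  show ?thesis unfolding col
    apply (simp add: trace_def matrix_matrix_mult_def transpose_def
      inner_vec_def matrix_vector_mult_def sum_distrib_left sum_distrib_right mult_ac)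
    apply (rule sum.cong[OF refl])
    apply (subst sum.swap)
    apply (simp add: mult_ac)
    done
qed
end



lemma expectation_pair_swap:
  fixes h :: "'a \<times> 'b \<Rightarrow> real"
  assumes A: "finite (set_pmf A)" and B: "finite (set_pmf B)"
  shows "measure_pmf.expectation (pair_pmf A B) h =
         measure_pmf.expectation B (\<lambda>b. measure_pmf.expectation A (\<lambda>a. h (a,b)))"
proof -
  have "measure_pmf.expectation (pair_pmf A B) h = (\<Sum>x\<in>set_pmf A \<times> set_pmf B. h x * pmf (pair_pmf A B) x)"
    by (rule integral_measure_pmf_real) (auto simp: A B)
  also have "\<dots> = (\<Sum>a\<in>set_pmf A. \<Sum>b\<in>set_pmf B. h (a,b) * (pmf A a * pmf B b))"
    by (simp add: sum.cartesian_product case_prod_unfold) (metis (no_types) pmf_pair prod.collapse)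
  also have "\<dots> = (\<Sum>b\<in>set_pmf B. \<Sum>a\<in>set_pmf A. h (a,b) * (pmf A a * pmf B b))"
    by (rule sum.swap)
  also have "\<dots> = (\<Sum>b\<in>set_pmf B. (\<Sum>a\<in>set_pmf A. h (a,b) * pmf A a) * pmf B b)"
    by (simp add: sum_distrib_left sum_distrib_right mult_ac)
  also have "\<dots> = (\<Sum>b\<in>set_pmf B. measure_pmf.expectation A (\<lambda>a. h (a,b)) * pmf B b)"
    by (intro sum.cong refl, subst integral_measure_pmf_real[OF A]) auto
  also have "\<dots> = measure_pmf.expectation B (\<lambda>b. measure_pmf.expectation A (\<lambda>a. h (a,b)))"
    by (rule integral_measure_pmf_real[symmetric]) (auto simp: B)
  finally show ?thesis .
qed

abbreviation Om :: "nat \<Rightarrow> (nat \<Rightarrow> 'n::finite) pmf" where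
  "Om j \<equiv> Pi_pmf {..<j} undefined (\<lambda>_. pmf_of_set (UNIV :: 'n set))"

lemma fin_Om: "finite (set_pmf (Om j :: (nat \<Rightarrow> 'n::finite) pmf))"
  by (simp add: set_Pi_pmf finite_PiE_dflt)

lemma Mmat_upd: "k \<le> j \<Longrightarrow> Mmat V (f(j:=y)) k = Mmat V f k"
  by (induction k) auto

lemma Om_Suc:
  fixes g :: "(nat \<Rightarrow> 'n::finite) \<Rightarrow> real"
  shows "measure_pmf.expectation (Om (Suc j)) g =
    measure_pmf.expectation (Om j) (\<lambda>f. (\<Sum>y\<in>UNIV. g (f(j:=y))) / real CARD('n))"
proof -
  have "Om (Suc j) = map_pmf (\<lambda>(y,f). f(j:=y)) (pair_pmf (pmf_of_set (UNIV::'n set)) (Om j))"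
    unfolding lessThan_Suc by (rule Pi_pmf_insert) auto
  then have "measure_pmf.expectation (Om (Suc j)) g =
     measure_pmf.expectation (pair_pmf (pmf_of_set (UNIV::'n set)) (Om j)) (\<lambda>(y,f). g (f(j:=y)))"
    by (simp add: case_prod_unfold)
  also have "\<dots> = measure_pmf.expectation (Om j) (\<lambda>f. measure_pmf.expectation (pmf_of_set (UNIV::'n set)) (\<lambda>y. g (f(j:=y))))"
    by (subst expectation_pair_swap) (auto simp: fin_Om)
  also have "\<dots> = measure_pmf.expectation (Om j) (\<lambda>f. (\<Sum>y\<in>UNIV. g (f(j:=y))) / real CARD('n))"
    by (simp add: integral_pmf_of_set)
  finally show ?thesis .
qed

lemma lam_le:
  fixes V :: "real^'n^'n"
  assumes sym: "transpose V = V" and diag: "\<forall>i. V $ i $ i = 1"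
    and ev: "\<forall>mu. is_eigenvalue V mu \<longrightarrow> lam \<le> mu"
  shows "lam \<le> 1"
proof -
  define e :: "real^'n" where "e = axis undefined 1"
  have "lam * (e \<bullet> e) \<le> e \<bullet> (V *v e)" by (rule rayleigh[OF sym ev])
  moreover have "e \<bullet> e = 1" by (simp add: e_def)
  moreover have "e \<bullet> (V *v e) = 1" using diag
    by (simp add: e_def matrix_vector_mult_basis column_def inner_axis')
  ultimately show ?thesis by simp
qed

lemma c_nonneg:
  fixes V :: "real^'n^'n"
  assumes sym: "transpose V = V" and diag: "\<forall>i. V $ i $ i = 1"
    and ev: "\<forall>mu. is_eigenvalue V mu \<longrightarrow> lam \<le> mu"
  shows "0 \<le> 1 - lam / real CARD('n)"
proof -
  have "lam \<le> 1" by (rule lam_le[OF sym diag ev])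
  moreover have "1 \<le> real CARD('n)" by simp
  ultimately have "lam \<le> real CARD('n)" by linarith
  then show ?thesis by (simp add: divide_le_eq)
qed

lemma vec_decay:
  fixes V :: "real^'n^'n"
  assumes sym: "transpose V = V" and pd: "pos_def V" and diag: "\<forall>i. V $ i $ i = 1"
    and ev: "\<forall>mu. is_eigenvalue V mu \<longrightarrow> lam \<le> mu"
  shows "measure_pmf.expectation (Om j) (\<lambda>idx. (Mmat V idx j *v x) \<bullet> (Mmat V idx j *v x))
      \<le> (1 - lam / real CARD('n)) ^ j * (x \<bullet> x)"
proof (induction j)
  case 0
  then show ?case by simp
next
  case (Suc j)
  define c where "c = 1 - lam / real CARD('n)"
  have c: "0 \<le> c" unfolding c_def by (rule c_nonneg[OF sym diag ev])
  define z where "z f = Mmat V f j *v x" for f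
  have "measure_pmf.expectation (Om (Suc j)) (\<lambda>idx. (Mmat V idx (Suc j) *v x) \<bullet> (Mmat V idx (Suc j) *v x))
      = measure_pmf.expectation (Om j) (\<lambda>f. (\<Sum>y\<in>UNIV. (Mmat V (f(j:=y)) (Suc j) *v x) \<bullet> (Mmat V (f(j:=y)) (Suc j) *v x)) / real CARD('n))"
    by (rule Om_Suc)
  also have "\<dots> = measure_pmf.expectation (Om j) (\<lambda>f. (\<Sum>y\<in>UNIV. (Pmat V y *v z f) \<bullet> (Pmat V y *v z f)) / real CARD('n))"
    by (simp add: Mmat_upd z_def matrix_vector_mul_assoc[symmetric])
  also have "\<dots> \<le> measure_pmf.expectation (Om j) (\<lambda>f. c * (z f \<bullet> z f))"
    by (rule integral_mono)
      (auto simp: c_def intro!: integrable_measure_pmf_finite fin_Om step_avg[OF sym pd diag ev])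
  also have "\<dots> = c * measure_pmf.expectation (Om j) (\<lambda>f. z f \<bullet> z f)"
    by simp
  also have "\<dots> \<le> c * (c ^ j * (x \<bullet> x))"
    using Suc.IH c unfolding z_def c_def by (intro mult_left_mono) auto
  finally show ?case by (simp add: c_def)
qed

theorem lemma5p1:
  fixes V :: "real^'n^'n" and lam :: real and j :: nat
  assumes "transpose V = V"
    and "\<forall>i. V $ i $ i = 1"
    and "pos_def V"
    and "is_eigenvalue V lam"
    and "\<forall>mu. is_eigenvalue V mu \<longrightarrow> lam \<le> mu"
  shows "measure_pmf.expectation (Pi_pmf {..<j} undefined (\<lambda>_. pmf_of_set (UNIV :: 'n set)))
           (\<lambda>idx. (Vnorm V (Mmat V idx j))\<^sup>2)
         \<le> (real CARD('n))\<^sup>2 * (1 - lam / real CARD('n)) ^ j"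
proof -
  note sym = assms(1) and diag = assms(2) and pd = assms(3) and ev = assms(5)
  define d where "d = real CARD('n)"
  define c where "c = 1 - lam / real CARD('n)"
  have bound: "(Vnorm V A)\<^sup>2 \<le> d * (\<Sum>k\<in>UNIV. (A *v axis k 1) \<bullet> (A *v axis k 1))" for A
  proof -
    have tr: "trace (transpose A ** V ** A) = (\<Sum>k\<in>UNIV. (A *v axis k 1) \<bullet> (V *v (A *v axis k 1)))"
      by (rule trace_formula[OF sym pd diag])
    have "0 \<le> trace (transpose A ** V ** A)" unfolding tr
      by (intro sum_nonneg quad_nonneg[OF sym pd diag])
    hence "(Vnorm V A)\<^sup>2 = trace (transpose A ** V ** A)" by (simp add: Vnorm_def)
    also have "\<dots> \<le> (\<Sum>k\<in>UNIV. d * ((A *v axis k 1) \<bullet> (A *v axis k 1)))" unfolding tr d_def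
      by (intro sum_mono quad_upper[OF sym pd diag])
    finally show ?thesis by (simp add: sum_distrib_left)
  qed
  have "measure_pmf.expectation (Om j) (\<lambda>idx. (Vnorm V (Mmat V idx j))\<^sup>2)
      \<le> measure_pmf.expectation (Om j) (\<lambda>idx. d * (\<Sum>k\<in>UNIV. (Mmat V idx j *v axis k 1) \<bullet> (Mmat V idx j *v axis k 1)))"
    by (rule integral_mono) (auto intro!: integrable_measure_pmf_finite fin_Om bound)
  also have "\<dots> = d * (\<Sum>k\<in>UNIV. measure_pmf.expectation (Om j) (\<lambda>idx. (Mmat V idx j *v axis k 1) \<bullet> (Mmat V idx j *v axis k 1)))"
    by (simp add: integral_sum integrable_measure_pmf_finite fin_Om)
  also have "\<dots> \<le> d * (\<Sum>k\<in>(UNIV::'n set). c ^ j)"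
  proof (intro mult_left_mono sum_mono)
    fix k :: 'n
    show "measure_pmf.expectation (Om j) (\<lambda>idx. (Mmat V idx j *v axis k 1) \<bullet> (Mmat V idx j *v axis k 1)) \<le> c ^ j"
      using vec_decay[OF sym pd diag ev, of j "axis k 1"] by (simp add: c_def)
  qed (simp add: d_def)
  also have "\<dots> = d\<^sup>2 * c ^ j" by (simp add: d_def power2_eq_square)
  finally show ?thesis by (simp add: d_def c_def)
qed

end
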